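(* With $S$, $\hat f^i$, $\mathbf{K}$, $d_S$, $M(v)$ as in the context, let $v\in M_\mathbf{K}$ be an archimedean place. Then for every $\ell\ge1$ and every sequence $g^1,\dots,g^\ell\in S$, the endomorphism $\hat w=\hat g^\ell\circ\cdots\circ\hat g^1$ of $\mathbb{A}^{m+1}$ satisfies $\log|\hat w|_v\le 2\log(M(v))\,d_S^\ell+\log(m\,d_S^m)\,d_S^{2\ell}$.
   Context: For a number field $\mathbf{K}$, $M_\mathbf{K}$ is its set of places, with absolute values normalized by $|x|_v=|{\mathrm{Norm}}_{\mathbf{K}_v/\mathbf{Q}_p}(x)|_p^{1/[\mathbf{K}:\mathbf{Q}]}$ for $v$ above $p$ (prime or $\infty$). For $f=\sum_Ia_I\mathbf{x}^I\in\mathbf{K}[x_0,\dots,x_m]$, $|f|_v=\max_I|a_I|_v$; for $\hat f=(f_0,\dots,f_m)$, $|\hat f|_v=\max_i|f_i|_v$. Setup: $S=\{f^1,\dots,f^s\}$ is a finite symmetric subset of ${\sf{Bir}}(\mathbb{P}^m_{\overline{\mathbf{Q}}})$; each $f^i=[f^i_0:\dots:f^i_m]$ with $f^i_j$ homogeneous of degree $d_i=\deg f^i$ without common factor, normalized so that some coefficient equals $1$; $\hat f^i=(f^i_0,\dots,f^i_m)$. $\mathbf{K}$ is generated by all coefficients of the $f^i_j$; $M(v)=\max_i|\hat f^i|_v$; $d_S=\max\{2,d_1,\dots,d_s\}$. *)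

theory Defs
  imports Complex_Main "HOL-Library.Poly_Mapping" "HOL-Computational_Algebra.Polynomial"
begin

text \<open>Multivariate polynomials with coefficients in the algebraic closure of Q,
  viewed inside the complex numbers: a polynomial is a finitely supported map from
  exponent vectors (variable index to exponent) to coefficients.
  A polynomial map (f_0,...,f_m) is a function nat \<Rightarrow> mpoly (components j > m are zero).\<close>

type_synonym mpoly = "(nat \<Rightarrow>\<^sub>0 nat) \<Rightarrow>\<^sub>0 complex"
type_synonym pmap = "nat \<Rightarrow> mpoly"

definition Var :: "nat \<Rightarrow> mpoly" where
  "Var i = Poly_Mapping.single (Poly_Mapping.single i 1) 1"

definition Const :: "complex \<Rightarrow> mpoly" where
  "Const c = Poly_Mapping.single 0 c"

definition subst :: "mpoly \<Rightarrow> pmap \<Rightarrow> mpoly" where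
  "subst p F = (\<Sum>\<alpha>\<in>Poly_Mapping.keys p. Const (Poly_Mapping.lookup p \<alpha>) * (\<Prod>i\<in>Poly_Mapping.keys \<alpha>. F i ^ Poly_Mapping.lookup \<alpha> i))"

definition comp_map :: "pmap \<Rightarrow> pmap \<Rightarrow> pmap" where
  "comp_map G F = (\<lambda>j. subst (G j) F)"

definition tdeg :: "(nat \<Rightarrow>\<^sub>0 nat) \<Rightarrow> nat" where
  "tdeg \<alpha> = (\<Sum>i\<in>Poly_Mapping.keys \<alpha>. Poly_Mapping.lookup \<alpha> i)"

definition homog :: "nat \<Rightarrow> mpoly \<Rightarrow> bool" where
  "homog d p \<longleftrightarrow> (\<forall>\<alpha>\<in>Poly_Mapping.keys p. tdeg \<alpha> = d)"

definition vars_in :: "nat \<Rightarrow> mpoly \<Rightarrow> bool" where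
  "vars_in m p \<longleftrightarrow> (\<forall>\<alpha>\<in>Poly_Mapping.keys p. Poly_Mapping.keys \<alpha> \<subseteq> {..m})"

definition no_common_factor :: "nat \<Rightarrow> pmap \<Rightarrow> bool" where
  "no_common_factor m F \<longleftrightarrow> (\<forall>q. (\<forall>j\<le>m. q dvd F j) \<longrightarrow> (\<exists>c. q = Const c))"

definition hom_rep :: "nat \<Rightarrow> nat \<Rightarrow> pmap \<Rightarrow> bool" where
  "hom_rep m d F \<longleftrightarrow> (\<forall>j>m. F j = 0) \<and> (\<exists>j\<le>m. F j \<noteq> 0)
     \<and> (\<forall>j\<le>m. vars_in m (F j) \<and> homog d (F j)) \<and> no_common_factor m F"

definition map_deg :: "nat \<Rightarrow> pmap \<Rightarrow> nat" where
  "map_deg m F = (THE d. hom_rep m d F)"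

text \<open>G o F = id as rational maps of P^m: G(F(x)) = h(x) x with h nonzero.\<close>
definition left_inv :: "nat \<Rightarrow> pmap \<Rightarrow> pmap \<Rightarrow> bool" where
  "left_inv m G F \<longleftrightarrow> (\<exists>h. h \<noteq> 0 \<and> (\<forall>j\<le>m. comp_map G F j = h * Var j))"

definition birational :: "nat \<Rightarrow> pmap \<Rightarrow> bool" where
  "birational m F \<longleftrightarrow> (\<exists>d. hom_rep m d F) \<and>
     (\<exists>G d'. hom_rep m d' G \<and> left_inv m G F \<and> left_inv m F G)"

definition symmetric_set :: "nat \<Rightarrow> pmap set \<Rightarrow> bool" where
  "symmetric_set m S \<longleftrightarrow> (\<forall>F\<in>S. \<exists>G\<in>S. left_inv m G F \<and> left_inv m F G)"

definition normalized :: "nat \<Rightarrow> pmap \<Rightarrow> bool" where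
  "normalized m F \<longleftrightarrow> (\<exists>j\<le>m. \<exists>\<alpha>. Poly_Mapping.lookup (F j) \<alpha> = 1)"

definition coeffs :: "nat \<Rightarrow> pmap set \<Rightarrow> complex set" where
  "coeffs m S = {Poly_Mapping.lookup (F j) \<alpha> | F j \<alpha>. F \<in> S \<and> j \<le> m \<and> \<alpha> \<in> Poly_Mapping.keys (F j)}"

definition is_subfield :: "complex set \<Rightarrow> bool" where
  "is_subfield L \<longleftrightarrow> 0 \<in> L \<and> 1 \<in> L \<and> (\<forall>x\<in>L. \<forall>y\<in>L. x + y \<in> L \<and> x * y \<in> L)
     \<and> (\<forall>x\<in>L. - x \<in> L \<and> inverse x \<in> L)"

definition gen_field :: "complex set \<Rightarrow> complex set" where
  "gen_field A = \<Inter>{L. is_subfield L \<and> A \<subseteq> L}"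

definition q_basis :: "complex set \<Rightarrow> complex set \<Rightarrow> bool" where
  "q_basis K B \<longleftrightarrow> finite B \<and> B \<subseteq> K
     \<and> (\<forall>c. (\<Sum>b\<in>B. of_rat (c b) * b) = 0 \<longrightarrow> (\<forall>b\<in>B. c b = 0))
     \<and> K = {x. \<exists>c. x = (\<Sum>b\<in>B. of_rat (c b) * b)}"

definition field_degree :: "complex set \<Rightarrow> nat" where
  "field_degree K = (THE n. \<exists>B. q_basis K B \<and> card B = n)"

text \<open>Archimedean places of K correspond to field embeddings sigma : K \<rightarrow> C.\<close>
definition field_emb :: "complex set \<Rightarrow> (complex \<Rightarrow> complex) \<Rightarrow> bool" where
  "field_emb K \<sigma> \<longleftrightarrow> \<sigma> 1 = 1 \<and> (\<forall>x\<in>K. \<forall>y\<in>K. \<sigma> (x + y) = \<sigma> x + \<sigma> y \<and> \<sigma> (x * y) = \<sigma> x * \<sigma> y)"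

text \<open>[K_v : R] = 1 for a real place, 2 for a complex place.\<close>
definition local_deg :: "complex set \<Rightarrow> (complex \<Rightarrow> complex) \<Rightarrow> nat" where
  "local_deg K \<sigma> = (if \<sigma> ` K \<subseteq> \<real> then 1 else 2)"

text \<open>|x|_v = |Norm_{K_v/R}(sigma x)|^(1/[K:Q]) = |sigma x|^([K_v:R]/[K:Q]).\<close>
definition absv :: "complex set \<Rightarrow> (complex \<Rightarrow> complex) \<Rightarrow> complex \<Rightarrow> real" where
  "absv K \<sigma> x = cmod (\<sigma> x) powr (real (local_deg K \<sigma>) / real (field_degree K))"

definition poly_absv :: "complex set \<Rightarrow> (complex \<Rightarrow> complex) \<Rightarrow> mpoly \<Rightarrow> real" where
  "poly_absv K \<sigma> p = Max (insert 0 ((\<lambda>\<alpha>. absv K \<sigma> (Poly_Mapping.lookup p \<alpha>)) ` Poly_Mapping.keys p))"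

definition map_absv :: "complex set \<Rightarrow> (complex \<Rightarrow> complex) \<Rightarrow> nat \<Rightarrow> pmap \<Rightarrow> real" where
  "map_absv K \<sigma> m F = Max ((\<lambda>j. poly_absv K \<sigma> (F j)) ` {..m})"

end

theory Submission imports Defs "HOL-Library.FuncSet" begin

lemma monomial_expand:
  fixes p :: "('a::comm_monoid_add) \<Rightarrow>\<^sub>0 ('b::comm_semiring_1)"
  shows "p = (\<Sum>a\<in>Poly_Mapping.keys p. Poly_Mapping.single a (Poly_Mapping.lookup p a))"
proof (rule poly_mapping_eqI)
  fix k
  show "Poly_Mapping.lookup p k = Poly_Mapping.lookup (\<Sum>a\<in>Poly_Mapping.keys p. Poly_Mapping.single a (Poly_Mapping.lookup p a)) k"
    unfolding lookup_sum lookup_single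
    by (cases "k \<in> Poly_Mapping.keys p") (auto simp: when_def in_keys_iff)
qed

lemma tdeg_eq: "finite A \<Longrightarrow> Poly_Mapping.keys \<alpha> \<subseteq> A \<Longrightarrow> tdeg \<alpha> = (\<Sum>i\<in>A. Poly_Mapping.lookup \<alpha> i)"
  unfolding tdeg_def by (rule sum.mono_neutral_left) (auto simp: in_keys_iff)

definition kp :: "complex set \<Rightarrow> mpoly \<Rightarrow> bool" where
  "kp K p \<longleftrightarrow> (\<forall>\<alpha>. Poly_Mapping.lookup p \<alpha> \<in> K)"

definition nrm :: "(complex \<Rightarrow> complex) \<Rightarrow> mpoly \<Rightarrow> real" where
  "nrm \<sigma> p = (\<Sum>\<alpha>\<in>Poly_Mapping.keys p. cmod (\<sigma> (Poly_Mapping.lookup p \<alpha>)))"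

locale emb =
  fixes K :: "complex set" and \<sigma> :: "complex \<Rightarrow> complex"
  assumes sf: "is_subfield K"
    and one: "\<sigma> 1 = 1"
    and hom: "\<forall>x\<in>K. \<forall>y\<in>K. \<sigma> (x + y) = \<sigma> x + \<sigma> y \<and> \<sigma> (x * y) = \<sigma> x * \<sigma> y"
begin

lemma zeroK: "0 \<in> K" and oneK: "1 \<in> K" and addK: "x \<in> K \<Longrightarrow> y \<in> K \<Longrightarrow> x + y \<in> K"
  and mulK: "x \<in> K \<Longrightarrow> y \<in> K \<Longrightarrow> x * y \<in> K"
  using sf unfolding is_subfield_def by auto

lemma sadd: "x \<in> K \<Longrightarrow> y \<in> K \<Longrightarrow> \<sigma> (x + y) = \<sigma> x + \<sigma> y"
  and smul: "x \<in> K \<Longrightarrow> y \<in> K \<Longrightarrow> \<sigma> (x * y) = \<sigma> x * \<sigma> y"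
  using hom by auto

lemma szero: "\<sigma> 0 = 0"
  using sadd[OF zeroK zeroK] by simp

lemma sumK: "finite A \<Longrightarrow> (\<And>a. a \<in> A \<Longrightarrow> f a \<in> K) \<Longrightarrow> sum f A \<in> K"
  by (induction A rule: finite_induct) (auto intro: zeroK addK)

lemma ssum: "finite A \<Longrightarrow> (\<And>a. a \<in> A \<Longrightarrow> f a \<in> K) \<Longrightarrow> \<sigma> (sum f A) = (\<Sum>a\<in>A. \<sigma> (f a))"
  by (induction A rule: finite_induct) (auto simp: szero sadd sumK)

lemma nrm_eq:
  assumes "finite A" "Poly_Mapping.keys p \<subseteq> A"
  shows "nrm \<sigma> p = (\<Sum>\<alpha>\<in>A. cmod (\<sigma> (Poly_Mapping.lookup p \<alpha>)))"
  unfolding nrm_def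
  by (rule sum.mono_neutral_left) (use assms in \<open>auto simp: in_keys_iff szero\<close>)

lemma kp_zero: "kp K 0" by (simp add: kp_def zeroK)
lemma kp_add: "kp K p \<Longrightarrow> kp K q \<Longrightarrow> kp K (p + q)"
  by (simp add: kp_def lookup_add addK)
lemma kp_single: "c \<in> K \<Longrightarrow> kp K (Poly_Mapping.single a c)"
  by (simp add: kp_def lookup_single when_def zeroK)
lemma kp_sum: "finite A \<Longrightarrow> (\<And>a. a \<in> A \<Longrightarrow> kp K (f a)) \<Longrightarrow> kp K (sum f A)"
  by (induction A rule: finite_induct) (auto intro: kp_zero kp_add)

lemma nrm_add: assumes "kp K p" "kp K q" shows "nrm \<sigma> (p + q) \<le> nrm \<sigma> p + nrm \<sigma> q"
proof -
  let ?A = "Poly_Mapping.keys p \<union> Poly_Mapping.keys q"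
  have "nrm \<sigma> (p + q) = (\<Sum>\<alpha>\<in>?A. cmod (\<sigma> (Poly_Mapping.lookup (p+q) \<alpha>)))"
    by (rule nrm_eq) (auto simp: keys_add)
  also have "\<dots> \<le> (\<Sum>\<alpha>\<in>?A. cmod (\<sigma> (Poly_Mapping.lookup p \<alpha>)) + cmod (\<sigma> (Poly_Mapping.lookup q \<alpha>)))"
    apply (rule sum_mono) using assms by (auto simp: lookup_add kp_def sadd norm_triangle_ineq)
  also have "\<dots> = nrm \<sigma> p + nrm \<sigma> q"
    by (simp add: sum.distrib nrm_eq[of ?A p] nrm_eq[of ?A q])
  finally show ?thesis .
qed

lemma nrm_nonneg: "0 \<le> nrm \<sigma> p" by (simp add: nrm_def sum_nonneg)

lemma nrm_sum: "finite A \<Longrightarrow> (\<And>a. a \<in> A \<Longrightarrow> kp K (f a)) \<Longrightarrow> nrm \<sigma> (sum f A) \<le> (\<Sum>a\<in>A. nrm \<sigma> (f a))"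
proof (induction A rule: finite_induct)
  case empty then show ?case by (simp add: nrm_def)
next
  case (insert x F)
  have "nrm \<sigma> (sum f (insert x F)) = nrm \<sigma> (f x + sum f F)" using insert by simp
  also have "\<dots> \<le> nrm \<sigma> (f x) + nrm \<sigma> (sum f F)"
    by (rule nrm_add) (use insert in \<open>auto intro: kp_sum\<close>)
  also have "\<dots> \<le> nrm \<sigma> (f x) + (\<Sum>a\<in>F. nrm \<sigma> (f a))" using insert by auto
  finally show ?case using insert by simp
qed

lemma nrm_single: "nrm \<sigma> (Poly_Mapping.single a c) = cmod (\<sigma> c)"
  by (simp add: nrm_def szero)

lemma prod_expand:
  fixes p q :: mpoly
  shows "p * q = (\<Sum>a\<in>Poly_Mapping.keys p. \<Sum>b\<in>Poly_Mapping.keys q.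
     Poly_Mapping.single (a + b) (Poly_Mapping.lookup p a * Poly_Mapping.lookup q b))"
proof -
  have "p * q = (\<Sum>a\<in>Poly_Mapping.keys p. Poly_Mapping.single a (Poly_Mapping.lookup p a)) *
      (\<Sum>b\<in>Poly_Mapping.keys q. Poly_Mapping.single b (Poly_Mapping.lookup q b))"
    by (metis monomial_expand)
  also have "\<dots> = (\<Sum>a\<in>Poly_Mapping.keys p. \<Sum>b\<in>Poly_Mapping.keys q.
     Poly_Mapping.single a (Poly_Mapping.lookup p a) * Poly_Mapping.single b (Poly_Mapping.lookup q b))"
    by (simp add: sum_product)
  finally show ?thesis by (simp add: mult_single)
qed

lemma kp_mult: assumes "kp K p" "kp K q" shows "kp K (p * q)"
  apply (subst prod_expand)
  apply (intro kp_sum kp_single finite_keys mulK)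
  using assms by (auto simp: kp_def)

lemma nrm_mult: assumes "kp K p" "kp K q" shows "nrm \<sigma> (p * q) \<le> nrm \<sigma> p * nrm \<sigma> q"
proof -
  have "nrm \<sigma> (p * q) \<le> (\<Sum>a\<in>Poly_Mapping.keys p. nrm \<sigma> (\<Sum>b\<in>Poly_Mapping.keys q.
     Poly_Mapping.single (a + b) (Poly_Mapping.lookup p a * Poly_Mapping.lookup q b)))"
    apply (subst prod_expand)
    apply (rule nrm_sum, simp)
    by (intro kp_sum kp_single mulK finite_keys) (use assms in \<open>auto simp: kp_def\<close>)
  also have "\<dots> \<le> (\<Sum>a\<in>Poly_Mapping.keys p. \<Sum>b\<in>Poly_Mapping.keys q.
      nrm \<sigma> (Poly_Mapping.single (a + b) (Poly_Mapping.lookup p a * Poly_Mapping.lookup q b)))"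
    apply (rule sum_mono, rule nrm_sum, simp)
    by (intro kp_single mulK) (use assms in \<open>auto simp: kp_def\<close>)
  also have "\<dots> = nrm \<sigma> p * nrm \<sigma> q"
    unfolding nrm_single nrm_def sum_product
    apply (rule sum.cong[OF refl], rule sum.cong[OF refl])
    using assms by (auto simp: kp_def smul norm_mult)
  finally show ?thesis .
qed

lemma kp_one: "kp K 1"
  by (metis kp_single oneK single_one)
lemma nrm_one: "nrm \<sigma> 1 = 1"
  by (metis nrm_single one norm_one single_one)

lemma kp_power: "kp K p \<Longrightarrow> kp K (p ^ n)"
  by (induction n) (auto intro: kp_one kp_mult)
lemma nrm_power: "kp K p \<Longrightarrow> nrm \<sigma> (p ^ n) \<le> nrm \<sigma> p ^ n"
proof (induction n)
  case 0 then show ?case by (simp add: nrm_one)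
next
  case (Suc n)
  have "nrm \<sigma> (p ^ Suc n) \<le> nrm \<sigma> p * nrm \<sigma> (p ^ n)"
    using Suc by (simp add: nrm_mult kp_power)
  also have "\<dots> \<le> nrm \<sigma> p * nrm \<sigma> p ^ n"
    using Suc by (simp add: mult_left_mono nrm_nonneg)
  finally show ?case by simp
qed

lemma kp_prod: "finite A \<Longrightarrow> (\<And>a. a \<in> A \<Longrightarrow> kp K (f a)) \<Longrightarrow> kp K (prod f A)"
  by (induction A rule: finite_induct) (auto intro: kp_one kp_mult)
lemma nrm_prod: "finite A \<Longrightarrow> (\<And>a. a \<in> A \<Longrightarrow> kp K (f a)) \<Longrightarrow> nrm \<sigma> (prod f A) \<le> (\<Prod>a\<in>A. nrm \<sigma> (f a))"
proof (induction A rule: finite_induct)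
  case empty then show ?case by (simp add: nrm_one)
next
  case (insert x F)
  have "nrm \<sigma> (prod f (insert x F)) \<le> nrm \<sigma> (f x) * nrm \<sigma> (prod f F)"
    using insert by (simp add: nrm_mult kp_prod)
  also have "\<dots> \<le> nrm \<sigma> (f x) * (\<Prod>a\<in>F. nrm \<sigma> (f a))"
    using insert by (simp add: mult_left_mono nrm_nonneg)
  finally show ?case using insert by simp
qed

lemma kp_Const: "c \<in> K \<Longrightarrow> kp K (Const c)"
  by (simp add: Const_def kp_single)
lemma nrm_Const: "nrm \<sigma> (Const c) = cmod (\<sigma> c)"
  by (simp add: Const_def nrm_single)

lemma kp_subst: assumes "kp K p" "\<And>i. kp K (F i)" shows "kp K (subst p F)"
  unfolding subst_def
  apply (intro kp_sum finite_keys kp_mult kp_Const kp_prod kp_power assms)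
  using assms(1) by (auto simp: kp_def)


lemma nrm_subst:
  assumes "kp K p" "\<And>i. kp K (F i)" "vars_in m p" "homog d p"
    "\<And>i. i \<le> m \<Longrightarrow> nrm \<sigma> (F i) \<le> L" "1 \<le> L"
  shows "nrm \<sigma> (subst p F) \<le> nrm \<sigma> p * L ^ d"
proof -
  have cK: "Poly_Mapping.lookup p \<alpha> \<in> K" for \<alpha> using assms(1) by (simp add: kp_def)
  have "nrm \<sigma> (subst p F) \<le> (\<Sum>\<alpha>\<in>Poly_Mapping.keys p. nrm \<sigma> (Const (Poly_Mapping.lookup p \<alpha>) *
       (\<Prod>i\<in>Poly_Mapping.keys \<alpha>. F i ^ Poly_Mapping.lookup \<alpha> i)))"
    unfolding subst_def
    apply (rule nrm_sum, simp)
    by (intro kp_mult kp_Const kp_prod kp_power assms cK finite_keys)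
  also have "\<dots> \<le> (\<Sum>\<alpha>\<in>Poly_Mapping.keys p. cmod (\<sigma> (Poly_Mapping.lookup p \<alpha>)) * L ^ d)"
  proof (rule sum_mono)
    fix \<alpha> assume a: "\<alpha> \<in> Poly_Mapping.keys p"
    have ks: "Poly_Mapping.keys \<alpha> \<subseteq> {..m}" using assms(3) a by (auto simp: vars_in_def)
    have td: "tdeg \<alpha> = d" using assms(4) a by (auto simp: homog_def)
    have "nrm \<sigma> (Const (Poly_Mapping.lookup p \<alpha>) * (\<Prod>i\<in>Poly_Mapping.keys \<alpha>. F i ^ Poly_Mapping.lookup \<alpha> i))
        \<le> nrm \<sigma> (Const (Poly_Mapping.lookup p \<alpha>)) * nrm \<sigma> (\<Prod>i\<in>Poly_Mapping.keys \<alpha>. F i ^ Poly_Mapping.lookup \<alpha> i)"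
      by (intro nrm_mult kp_Const kp_prod kp_power assms cK finite_keys)
    also have "\<dots> \<le> cmod (\<sigma> (Poly_Mapping.lookup p \<alpha>)) * (\<Prod>i\<in>Poly_Mapping.keys \<alpha>. L ^ Poly_Mapping.lookup \<alpha> i)"
    proof (unfold nrm_Const, rule mult_left_mono)
      have "nrm \<sigma> (\<Prod>i\<in>Poly_Mapping.keys \<alpha>. F i ^ Poly_Mapping.lookup \<alpha> i) \<le>
          (\<Prod>i\<in>Poly_Mapping.keys \<alpha>. nrm \<sigma> (F i ^ Poly_Mapping.lookup \<alpha> i))"
        by (intro nrm_prod kp_power assms finite_keys)
      also have "\<dots> \<le> (\<Prod>i\<in>Poly_Mapping.keys \<alpha>. L ^ Poly_Mapping.lookup \<alpha> i)"
      proof (rule prod_mono, rule conjI)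
        fix i assume i: "i \<in> Poly_Mapping.keys \<alpha>"
        show "0 \<le> nrm \<sigma> (F i ^ Poly_Mapping.lookup \<alpha> i)" by (rule nrm_nonneg)
        have "nrm \<sigma> (F i ^ Poly_Mapping.lookup \<alpha> i) \<le> nrm \<sigma> (F i) ^ Poly_Mapping.lookup \<alpha> i"
          by (intro nrm_power assms)
        also have "\<dots> \<le> L ^ Poly_Mapping.lookup \<alpha> i"
          using i ks by (intro power_mono assms nrm_nonneg) auto
        finally show "nrm \<sigma> (F i ^ Poly_Mapping.lookup \<alpha> i) \<le> L ^ Poly_Mapping.lookup \<alpha> i" .
      qed
      finally show "nrm \<sigma> (\<Prod>i\<in>Poly_Mapping.keys \<alpha>. F i ^ Poly_Mapping.lookup \<alpha> i) \<le>
          (\<Prod>i\<in>Poly_Mapping.keys \<alpha>. L ^ Poly_Mapping.lookup \<alpha> i)" .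
    qed simp
    also have "(\<Prod>i\<in>Poly_Mapping.keys \<alpha>. L ^ Poly_Mapping.lookup \<alpha> i) = L ^ d"
      using td by (metis tdeg_def power_sum)
    finally show "nrm \<sigma> (Const (Poly_Mapping.lookup p \<alpha>) * (\<Prod>i\<in>Poly_Mapping.keys \<alpha>. F i ^ Poly_Mapping.lookup \<alpha> i))
        \<le> cmod (\<sigma> (Poly_Mapping.lookup p \<alpha>)) * L ^ d" .
  qed
  also have "\<dots> = nrm \<sigma> p * L ^ d" by (simp add: nrm_def sum_distrib_right)
  finally show ?thesis .
qed

lemma coef_le_nrm: "cmod (\<sigma> (Poly_Mapping.lookup p \<alpha>)) \<le> nrm \<sigma> p"
proof (cases "\<alpha> \<in> Poly_Mapping.keys p")
  case True then show ?thesis unfolding nrm_def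
    by (intro member_le_sum) auto
next
  case False then show ?thesis by (simp add: in_keys_iff szero nrm_nonneg)
qed

lemma nrm_le_card: fixes C :: real shows "(\<And>\<alpha>. cmod (\<sigma> (Poly_Mapping.lookup p \<alpha>)) \<le> C) \<Longrightarrow>
   nrm \<sigma> p \<le> card (Poly_Mapping.keys p) * C"
  unfolding nrm_def using sum_bounded_above[of "Poly_Mapping.keys p" "\<lambda>\<alpha>. cmod (\<sigma> (Poly_Mapping.lookup p \<alpha>))" C]
  by simp

end

lemma card_keys_bound:
  fixes p :: mpoly
  assumes "vars_in m p" "homog d p"
  shows "card (Poly_Mapping.keys p) \<le> (d + 1) ^ m"
proof -
  let ?h = "\<lambda>\<alpha>::nat\<Rightarrow>\<^sub>0nat. restrict (Poly_Mapping.lookup \<alpha>) {..<m}"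
  have inj: "inj_on ?h (Poly_Mapping.keys p)"
  proof (rule inj_onI)
    fix \<alpha> \<beta> assume a: "\<alpha> \<in> Poly_Mapping.keys p" and b: "\<beta> \<in> Poly_Mapping.keys p" and e: "?h \<alpha> = ?h \<beta>"
    have ka: "Poly_Mapping.keys \<alpha> \<subseteq> {..m}" and kb: "Poly_Mapping.keys \<beta> \<subseteq> {..m}"
      using assms(1) a b by (auto simp: vars_in_def)
    have ta: "tdeg \<alpha> = d" and tb: "tdeg \<beta> = d" using assms(2) a b by (auto simp: homog_def)
    have lt: "Poly_Mapping.lookup \<alpha> i = Poly_Mapping.lookup \<beta> i" if "i < m" for i
    proof -
      have "?h \<alpha> i = ?h \<beta> i" by (simp only: e)
      then show ?thesis using that by simp
    qed
    have s: "tdeg \<gamma> = (\<Sum>i<m. Poly_Mapping.lookup \<gamma> i) + Poly_Mapping.lookup \<gamma> m"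
      if "Poly_Mapping.keys \<gamma> \<subseteq> {..m}" for \<gamma>
      using tdeg_eq[OF _ that] by (simp add: lessThan_Suc_atMost[symmetric])
    have sm: "(\<Sum>i<m. Poly_Mapping.lookup \<alpha> i) = (\<Sum>i<m. Poly_Mapping.lookup \<beta> i)"
      using lt by simp
    have "Poly_Mapping.lookup \<alpha> m = Poly_Mapping.lookup \<beta> m"
      using s[OF ka] s[OF kb] ta tb sm by simp
    moreover have "Poly_Mapping.lookup \<alpha> i = 0" "Poly_Mapping.lookup \<beta> i = 0" if "i > m" for i
      using ka kb that by (auto simp: not_in_keys_iff_lookup_eq_zero[symmetric])
    ultimately show "\<alpha> = \<beta>"
      by (intro poly_mapping_eqI) (metis lt linorder_neqE_nat)
  qed
  have sub: "?h ` Poly_Mapping.keys p \<subseteq> PiE {..<m} (\<lambda>_. {..d})"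
  proof
    fix x assume "x \<in> ?h ` Poly_Mapping.keys p"
    then obtain \<alpha> where a: "\<alpha> \<in> Poly_Mapping.keys p" and x: "x = ?h \<alpha>" by blast
    have ta: "tdeg \<alpha> = d" using assms(2) a by (auto simp: homog_def)
    have "Poly_Mapping.lookup \<alpha> i \<le> d" for i
    proof (cases "i \<in> Poly_Mapping.keys \<alpha>")
      case True then show ?thesis using ta unfolding tdeg_def
        by (metis finite_keys member_le_sum zero_le)
    qed (simp add: in_keys_iff)
    then show "x \<in> PiE {..<m} (\<lambda>_. {..d})" using x by auto
  qed
  have "card (Poly_Mapping.keys p) = card (?h ` Poly_Mapping.keys p)" using card_image[OF inj] by simp
  also have "\<dots> \<le> card (PiE {..<m} (\<lambda>_. {..d}))"
    by (rule card_mono[OF _ sub]) (simp add: finite_PiE)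
  also have "\<dots> = (d + 1) ^ m" by (simp add: card_PiE)
  finally show ?thesis .
qed


lemma gen_field_sub: "is_subfield (gen_field A)"
  unfolding gen_field_def is_subfield_def by auto

lemma gen_field_incl: "A \<subseteq> gen_field A"
  unfolding gen_field_def by auto

lemma map_deg_eq: assumes "hom_rep m d F" shows "map_deg m F = d"
proof -
  have u: "d' = d" if "hom_rep m d' F" for d'
  proof -
    obtain j where j: "j \<le> m" "F j \<noteq> 0" using assms by (auto simp: hom_rep_def)
    then obtain \<alpha> where a: "\<alpha> \<in> Poly_Mapping.keys (F j)"
      by (metis all_not_in_conv keys_eq_empty)
    have "tdeg \<alpha> = d" "tdeg \<alpha> = d'" using assms that j a by (auto simp: hom_rep_def homog_def)
    then show ?thesis by simp
  qed
  show ?thesis unfolding map_deg_def using assms u by (rule the_equality)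
qed

lemma poly_absv_nonneg: "0 \<le> poly_absv K \<sigma> p"
  unfolding poly_absv_def by (simp add: Max_ge_iff)

lemma absv_le_poly_absv:
  assumes "\<sigma> 0 = 0"
  shows "absv K \<sigma> (Poly_Mapping.lookup p \<alpha>) \<le> poly_absv K \<sigma> p"
proof (cases "\<alpha> \<in> Poly_Mapping.keys p")
  case True then show ?thesis unfolding poly_absv_def by (intro Max_ge) auto
next
  case False then show ?thesis using assms poly_absv_nonneg
    by (simp add: in_keys_iff absv_def)
qed

lemma poly_absv_le:
  assumes "\<And>\<alpha>. absv K \<sigma> (Poly_Mapping.lookup p \<alpha>) \<le> C" "0 \<le> C"
  shows "poly_absv K \<sigma> p \<le> C"
  unfolding poly_absv_def using assms by (auto simp: Max_le_iff)

lemma map_absv_le: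
  assumes "\<And>j. j \<le> m \<Longrightarrow> poly_absv K \<sigma> (F j) \<le> C"
  shows "map_absv K \<sigma> m F \<le> C"
  unfolding map_absv_def using assms by (auto simp: Max_le_iff)

lemma poly_absv_le_map_absv: "j \<le> m \<Longrightarrow> poly_absv K \<sigma> (F j) \<le> map_absv K \<sigma> m F"
  unfolding map_absv_def by (intro Max_ge) auto

lemma map_absv_nonneg: "0 \<le> map_absv K \<sigma> m F"
  using poly_absv_le_map_absv[of 0 m] poly_absv_nonneg by (metis order_trans zero_le)


lemma final_ineq:
  fixes d x m e lM :: real
  assumes "2 \<le> d" "2 \<le> x" "1 \<le> m" "0 \<le> e" "e \<le> 2" "0 \<le> lM"
  shows "lM * (x - 1) + e * (m * ln (d + 1)) * (x - 1) \<le> 2 * lM * x + (ln m + m * ln d) * x ^ 2"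
proof -
  have ld: "0 \<le> ln d" using assms by simp
  have dd: "d + 1 \<le> d * d" using mult_right_mono[of 2 d d] assms by linarith
  have "ln (d + 1) \<le> ln (d ^ 2)"
    using assms dd by (subst ln_le_cancel_iff) (auto simp: power2_eq_square)
  moreover have "ln (d ^ 2) = 2 * ln d" using assms by (simp add: ln_realpow)
  ultimately have l1: "ln (d + 1) \<le> 2 * ln d" by simp
  have l0: "0 \<le> ln (d + 1)" using assms by simp
  have "e * (m * ln (d + 1)) * (x - 1) \<le> 2 * (m * (2 * ln d)) * (x - 1)"
    using assms l1 l0 by (intro mult_mono mult_left_mono) auto
  also have "\<dots> = (m * ln d) * (4 * (x - 1))" by simp
  also have "\<dots> \<le> (m * ln d) * x ^ 2"
  proof (rule mult_left_mono)
    have "0 \<le> (x - 2) ^ 2" by simp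
    then show "4 * (x - 1) \<le> x ^ 2" by (simp add: power2_eq_square algebra_simps)
    show "0 \<le> m * ln d" using assms ld by simp
  qed
  finally have A: "e * (m * ln (d + 1)) * (x - 1) \<le> m * ln d * x ^ 2" .
  have B: "lM * (x - 1) \<le> 2 * lM * x" using assms mult_left_mono[of "x - 1" "2 * x" lM] by (simp add: algebra_simps)
  have C: "0 \<le> ln m * x ^ 2" using assms by simp
  show ?thesis using A B C by (simp add: algebra_simps)
qed


theorem lemma3p7:
  fixes m :: nat and S :: "pmap set" and \<sigma> :: "complex \<Rightarrow> complex" and gs :: "pmap list"
  assumes "m \<ge> 1"
    and "finite S"
    and "\<forall>F\<in>S. birational m F"
    and "symmetric_set m S"
    and "\<forall>F\<in>S. normalized m F"
    and "\<forall>c\<in>coeffs m S. algebraic c"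
    and "field_emb (gen_field (coeffs m S)) \<sigma>"
    and "gs \<noteq> []" and "set gs \<subseteq> S"
  shows "let K = gen_field (coeffs m S);
             M = Max ((\<lambda>F. map_absv K \<sigma> m F) ` S);
             dS = Max (insert 2 (map_deg m ` S));
             l = length gs;
             w = foldl (\<lambda>acc g. comp_map g acc) (hd gs) (tl gs)
         in ln (map_absv K \<sigma> m w)
              \<le> 2 * ln M * real dS ^ l + ln (real m * real dS ^ m) * real dS ^ (2 * l)"
proof -
  define K where "K = gen_field (coeffs m S)"
  define M where "M = Max ((\<lambda>F. map_absv K \<sigma> m F) ` S)"
  define dS where "dS = Max (insert 2 (map_deg m ` S))"
  define l where "l = length gs"
  define f where "f = (\<lambda>acc g. comp_map g acc)"
  define w where "w = foldl f (hd gs) (tl gs)"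
  define e where "e = real (local_deg K \<sigma>) / real (field_degree K)"
  define d where "d = real dS"
  have absv_e: "absv K \<sigma> x = cmod (\<sigma> x) powr e" for x by (simp add: absv_def e_def)
  have e0: "0 \<le> e" by (simp add: e_def)
  have e2: "e \<le> 2"
  proof -
    have "local_deg K \<sigma> \<le> 2" by (simp add: local_deg_def)
    then show ?thesis unfolding e_def
      by (cases "field_degree K = 0") (auto simp: field_simps)
  qed
  have sf: "is_subfield K" unfolding K_def by (rule gen_field_sub)
  have cK: "coeffs m S \<subseteq> K" unfolding K_def by (rule gen_field_incl)
  interpret E: emb K \<sigma>
    using sf assms(7) unfolding K_def[symmetric] field_emb_def by unfold_locales auto
  have hr: "hom_rep m (map_deg m F) F" if FS: "F \<in> S" for F
  proof -
    obtain d0 where "hom_rep m d0 F" using assms(3) FS by (auto simp: birational_def)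
    then show ?thesis by (simp add: map_deg_eq)
  qed
  have kpS: "kp K (F j)" if "F \<in> S" for F j
  proof (cases "j \<le> m")
    case True
    show ?thesis unfolding kp_def
    proof
      fix \<alpha>
      show "Poly_Mapping.lookup (F j) \<alpha> \<in> K"
      proof (cases "\<alpha> \<in> Poly_Mapping.keys (F j)")
        case True then show ?thesis using cK that \<open>j \<le> m\<close> unfolding coeffs_def by blast
      next
        case False then show ?thesis by (simp add: in_keys_iff E.zeroK)
      qed
    qed
  next
    case False then have "F j = 0" using hr[OF that] by (auto simp: hom_rep_def)
    then show ?thesis by (simp add: E.kp_zero)
  qed
  have Sne: "S \<noteq> {}" using assms(8,9) by (cases gs) auto
  have fin1: "finite ((\<lambda>F. map_absv K \<sigma> m F) ` S)" using assms(2) by simp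
  have coefM: "absv K \<sigma> (Poly_Mapping.lookup (F j) \<alpha>) \<le> M" if "F \<in> S" "j \<le> m" for F j \<alpha>
  proof -
    have "absv K \<sigma> (Poly_Mapping.lookup (F j) \<alpha>) \<le> poly_absv K \<sigma> (F j)"
      by (rule absv_le_poly_absv[where \<sigma>=\<sigma>, OF E.szero])
    also have "\<dots> \<le> map_absv K \<sigma> m F" by (rule poly_absv_le_map_absv[OF that(2)])
    also have "\<dots> \<le> M" unfolding M_def using fin1 that(1) by (intro Max_ge) auto
    finally show ?thesis .
  qed
  have M1: "1 \<le> M"
  proof -
    obtain F where F: "F \<in> S" using Sne by blast
    then obtain j \<alpha> where j: "j \<le> m" "Poly_Mapping.lookup (F j) \<alpha> = 1"
      using assms(5) by (auto simp: normalized_def)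
    have "absv K \<sigma> (Poly_Mapping.lookup (F j) \<alpha>) = 1" using j E.one by (simp add: absv_e)
    then show ?thesis using coefM[OF F j(1), of \<alpha>] by simp
  qed
  have lnM: "0 \<le> ln M" using M1 by simp
  have dS2: "2 \<le> dS" unfolding dS_def using assms(2) by (intro Max_ge) auto
  have dSge: "map_deg m F \<le> dS" if "F \<in> S" for F
    unfolding dS_def using assms(2) that by (intro Max_ge) auto
  have d2: "2 \<le> d" using dS2 by (simp add: d_def)
  have mpos: "1 \<le> real m" using assms(1) by simp
  have RHS0: "0 \<le> 2 * ln M * d ^ l + ln (real m * d ^ m) * d ^ (2 * l)"
  proof -
    have "1 \<le> d ^ m" using d2 by (intro one_le_power) auto
    then have "1 * 1 \<le> real m * d ^ m" using mpos by (intro mult_mono) auto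
    then have "0 \<le> ln (real m * d ^ m)" by simp
    then show ?thesis using lnM d2 by simp
  qed
  have main: "ln (map_absv K \<sigma> m w) \<le> 2 * ln M * d ^ l + ln (real m * d ^ m) * d ^ (2 * l)"
  proof (cases "e = 0")
    case True
    have "map_absv K \<sigma> m w \<le> 1"
      by (intro map_absv_le poly_absv_le) (auto simp: absv_e True)
    then have "ln (map_absv K \<sigma> m w) \<le> 0" using map_absv_nonneg[of K \<sigma> m w]
      by (cases "map_absv K \<sigma> m w = 0") auto
    then show ?thesis using RHS0 by linarith
  next
    case False
    then have epos: "0 < e" using e0 by simp
    define Mi where "Mi = M powr (1 / e)"
    have Mi1: "1 \<le> Mi" unfolding Mi_def using M1 epos by (simp add: ge_one_powr_ge_zero)
    have lnMi: "e * ln Mi = ln M" unfolding Mi_def using M1 epos by (simp add: ln_powr)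
    have coefMi: "cmod (\<sigma> (Poly_Mapping.lookup (F j) \<alpha>)) \<le> Mi" if "F \<in> S" "j \<le> m" for F j \<alpha>
    proof -
      have "(cmod (\<sigma> (Poly_Mapping.lookup (F j) \<alpha>)) powr e) powr (1 / e) \<le> M powr (1 / e)"
        using coefM[OF that, of \<alpha>] epos by (intro powr_mono2) (auto simp: absv_e)
      then show ?thesis unfolding Mi_def using epos by (simp add: powr_powr)
    qed
    define B where "B = (d + 1) ^ m * Mi"
    have "1 \<le> (d + 1) ^ m" using d2 by (intro one_le_power) auto
    then have "1 * 1 \<le> (d + 1) ^ m * Mi" using Mi1 by (intro mult_mono) auto
    then have B1: "1 \<le> B" unfolding B_def by simp
    have lnB: "0 \<le> ln B" using B1 by simp
    have nrmS: "nrm \<sigma> (F j) \<le> B" if "F \<in> S" "j \<le> m" for F j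
    proof -
      have "nrm \<sigma> (F j) \<le> card (Poly_Mapping.keys (F j)) * Mi"
        by (rule E.nrm_le_card) (rule coefMi[OF that])
      also have "\<dots> \<le> (d + 1) ^ m * Mi"
      proof (rule mult_right_mono)
        have "card (Poly_Mapping.keys (F j)) \<le> (map_deg m F + 1) ^ m"
          using hr[OF that(1)] that(2) by (intro card_keys_bound) (auto simp: hom_rep_def)
        also have "\<dots> \<le> (dS + 1) ^ m" using dSge[OF that(1)] by (simp add: power_mono)
        finally show "real (card (Poly_Mapping.keys (F j))) \<le> (d + 1) ^ m"
          unfolding d_def by (metis of_nat_1 of_nat_add of_nat_le_iff of_nat_power)
      qed (use Mi1 in simp)
      finally show ?thesis unfolding B_def .
    qed
    have step: "\<forall>acc k L. (\<forall>j. kp K (acc j)) \<longrightarrow> 1 \<le> L \<longrightarrow> (\<forall>j\<le>m. nrm \<sigma> (acc j) \<le> L) \<longrightarrow>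
        ln L \<le> ln B * (d ^ k - 1) \<longrightarrow> set rs \<subseteq> S \<longrightarrow>
        (\<exists>L'. 1 \<le> L' \<and> (\<forall>j\<le>m. nrm \<sigma> (foldl f acc rs j) \<le> L') \<and> ln L' \<le> ln B * (d ^ (k + length rs) - 1))"
      for rs
    proof (induction rs)
      case Nil then show ?case by auto
    next
      case (Cons g rs)
      show ?case
      proof (intro allI impI)
        fix acc k L
        assume kacc: "\<forall>j. kp K (acc j)" and L1: "1 \<le> L" and nL: "\<forall>j\<le>m. nrm \<sigma> (acc j) \<le> L"
          and lnL: "ln L \<le> ln B * (d ^ k - 1)" and gS: "set (g # rs) \<subseteq> S"
        have g: "g \<in> S" using gS by simp
        define acc' where "acc' = f acc g"
        have kacc': "\<forall>j. kp K (acc' j)" unfolding acc'_def f_def comp_map_def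
          using kacc kpS[OF g] by (auto intro: E.kp_subst)
        define L' where "L' = B * L ^ dS"
        have "1 \<le> L ^ dS" using L1 by (intro one_le_power) auto
        then have "1 * 1 \<le> B * L ^ dS" using B1 by (intro mult_mono) auto
        then have L'1: "1 \<le> L'" unfolding L'_def by simp
        have nL': "\<forall>j\<le>m. nrm \<sigma> (acc' j) \<le> L'"
        proof (intro allI impI)
          fix j assume j: "j \<le> m"
          have vh: "vars_in m (g j)" "homog (map_deg m g) (g j)"
            using hr[OF g] j by (auto simp: hom_rep_def)
          have "nrm \<sigma> (acc' j) \<le> nrm \<sigma> (g j) * L ^ map_deg m g"
            unfolding acc'_def f_def comp_map_def
            by (rule E.nrm_subst[OF kpS[OF g] _ vh]) (use kacc nL L1 in auto)
          also have "\<dots> \<le> B * L ^ dS"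
            by (intro mult_mono nrmS g j power_increasing dSge L1) (use L1 B1 in auto)
          finally show "nrm \<sigma> (acc' j) \<le> L'" unfolding L'_def .
        qed
        have "ln L' = ln B + real dS * ln L" unfolding L'_def using B1 L1
          by (simp add: ln_mult ln_realpow)
        also have "\<dots> \<le> ln B + d * (ln B * (d ^ k - 1))"
          using lnL d2 by (simp add: d_def mult_left_mono)
        also have "\<dots> \<le> ln B * (d ^ Suc k - 1)"
        proof -
          have "ln B + d * (ln B * (d ^ k - 1)) = ln B * (d ^ Suc k - d + 1)" by (simp add: algebra_simps)
          also have "\<dots> \<le> ln B * (d ^ Suc k - 1)" using lnB d2 by (intro mult_left_mono) auto
          finally show ?thesis .
        qed
        finally have lnL': "ln L' \<le> ln B * (d ^ Suc k - 1)" .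
        have ex: "\<exists>L''. 1 \<le> L'' \<and> (\<forall>j\<le>m. nrm \<sigma> (foldl f acc' rs j) \<le> L'') \<and>
            ln L'' \<le> ln B * (d ^ (Suc k + length rs) - 1)"
          by (rule Cons.IH[rule_format, OF _ L'1 _ lnL']) (use kacc' nL' gS in auto)
        from ex obtain L'' where "1 \<le> L''" "\<forall>j\<le>m. nrm \<sigma> (foldl f acc' rs j) \<le> L''"
            "ln L'' \<le> ln B * (d ^ (Suc k + length rs) - 1)" by auto
        then show "\<exists>L'. 1 \<le> L' \<and> (\<forall>j\<le>m. nrm \<sigma> (foldl f acc (g # rs) j) \<le> L') \<and>
            ln L' \<le> ln B * (d ^ (k + length (g # rs)) - 1)"
          unfolding acc'_def by (intro exI[of _ L'']) auto
      qed
    qed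
    have g1: "hd gs \<in> S" using assms(8,9) by (cases gs) auto
    have lB: "ln B \<le> ln B * (d ^ 1 - 1)" using lnB d2 by (simp add: mult_le_cancel_left1)
    have tS: "set (tl gs) \<subseteq> S" using assms(9) by (cases gs) auto
    have ex: "\<exists>L. 1 \<le> L \<and> (\<forall>j\<le>m. nrm \<sigma> (foldl f (hd gs) (tl gs) j) \<le> L) \<and>
        ln L \<le> ln B * (d ^ (1 + length (tl gs)) - 1)"
      by (rule step[of "tl gs", rule_format, OF _ B1 _ lB tS]) (use kpS[OF g1] nrmS[OF g1] in auto)
    then obtain L where L1: "1 \<le> L" and nL: "\<forall>j\<le>m. nrm \<sigma> (w j) \<le> L"
      and lnL: "ln L \<le> ln B * (d ^ (1 + length (tl gs)) - 1)"
      unfolding w_def by blast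
    have ll: "1 + length (tl gs) = l" using assms(8) by (cases gs) (auto simp: l_def)
    have mw: "map_absv K \<sigma> m w \<le> L powr e"
    proof (intro map_absv_le poly_absv_le)
      fix j \<alpha> assume j: "j \<le> m"
      have "cmod (\<sigma> (Poly_Mapping.lookup (w j) \<alpha>)) \<le> L"
        using E.coef_le_nrm[of "w j" \<alpha>] nL j by (meson order_trans)
      then show "absv K \<sigma> (Poly_Mapping.lookup (w j) \<alpha>) \<le> L powr e"
        unfolding absv_e using e0 by (intro powr_mono2) auto
    qed simp
    have lnw: "ln (map_absv K \<sigma> m w) \<le> e * ln L"
    proof (cases "map_absv K \<sigma> m w = 0")
      case True then show ?thesis using L1 e0 by simp
    next
      case False
      then have "0 < map_absv K \<sigma> m w" using map_absv_nonneg[of K \<sigma> m w] by simp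
      then have "ln (map_absv K \<sigma> m w) \<le> ln (L powr e)" using mw L1
        by (subst ln_le_cancel_iff) auto
      also have "\<dots> = e * ln L" using L1 by (simp add: ln_powr)
      finally show ?thesis .
    qed
    define x where "x = d ^ l"
    have "d ^ 1 \<le> d ^ l" using d2 ll by (intro power_increasing) auto
    then have x2: "2 \<le> x" unfolding x_def using d2 by simp
    have lnBeq: "ln B = m * ln (d + 1) + ln Mi" unfolding B_def using Mi1 d2
      by (simp add: ln_mult ln_realpow)
    have "ln (map_absv K \<sigma> m w) \<le> e * (ln B * (x - 1))"
      using lnw lnL ll e0 unfolding x_def by (meson mult_left_mono order_trans)
    also have "\<dots> = ln M * (x - 1) + e * (m * ln (d + 1)) * (x - 1)"
      unfolding lnBeq using lnMi by (simp add: algebra_simps)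
    also have "\<dots> \<le> 2 * ln M * x + (ln m + m * ln d) * x ^ 2"
      by (rule final_ineq[OF d2 x2 mpos e0 e2 lnM])
    also have "\<dots> = 2 * ln M * d ^ l + ln (real m * d ^ m) * d ^ (2 * l)"
      unfolding x_def using mpos d2 by (simp add: ln_mult ln_realpow power_mult mult.commute)
    finally show ?thesis .
  qed
  show ?thesis using main
    unfolding Let_def K_def[symmetric] M_def[symmetric] dS_def[symmetric] l_def[symmetric] f_def[symmetric]
      w_def[symmetric] d_def[symmetric] by simp
qed

end
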